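(* Assume the standing setting. Let $S$ be a subset of $U$ containing at most one end of $e_1$ (or a subset of $W$ containing at most one end of $e_2$), and let $S'\subseteq V(G)$ satisfy $N_G(S)\subseteq S'$ and $|S'|\ge 2$. Then $|S'|\ge |S|+2$.
   Context: Graphs may have multiple edges but no loops. An edge is admissible if it lies in some perfect matching; a connected graph with at least two vertices is matching covered if every edge is admissible; an edge $e$ of a matching covered graph $G$ is removable if $G-e$ is matching covered. A brick is a 3-connected nonbipartite graph $G$ such that $G-x-y$ has a perfect matching for all distinct $x,y$. A nonbipartite matching covered graph $G$ is near-bipartite if it has a pair of edges $\{e_1,e_2\}$ (a removable doubleton) such that $G-\{e_1,e_2\}$ is bipartite matching covered. $N_G(X)$ is the set of vertices outside $X$ with a neighbour in $X$. Standing setting: $G$ is a near-bipartite brick with removable doubleton $\{e_1,e_2\}$, $H=G-\{e_1,e_2\}$, and $(U,W)$ is the bipartition of $H$, labelled so that both ends of $e_1$ lie in $U$ and both ends of $e_2$ lie in $W$ (so $e_1$ is the only edge of $G$ with both ends in $U$ and $e_2$ the only edge with both ends in $W$). *)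

theory Defs
  imports Main
begin

text \<open>Parallel edges are allowed since distinct edges may have the same ends.\<close>

definition multigraph :: "'a set \<Rightarrow> 'e set \<Rightarrow> ('e \<Rightarrow> 'a set) \<Rightarrow> bool" where
  "multigraph V E ends \<longleftrightarrow> finite V \<and> finite E \<and>
     (\<forall>e\<in>E. ends e \<subseteq> V \<and> card (ends e) = 2)"

definition perfect_matching :: "'a set \<Rightarrow> 'e set \<Rightarrow> ('e \<Rightarrow> 'a set) \<Rightarrow> 'e set \<Rightarrow> bool" where
  "perfect_matching V E ends M \<longleftrightarrow> M \<subseteq> E \<and> (\<forall>v\<in>V. \<exists>!e. e \<in> M \<and> v \<in> ends e)"

definition has_perfect_matching :: "'a set \<Rightarrow> 'e set \<Rightarrow> ('e \<Rightarrow> 'a set) \<Rightarrow> bool" where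
  "has_perfect_matching V E ends \<longleftrightarrow> (\<exists>M. perfect_matching V E ends M)"

definition admissible :: "'a set \<Rightarrow> 'e set \<Rightarrow> ('e \<Rightarrow> 'a set) \<Rightarrow> 'e \<Rightarrow> bool" where
  "admissible V E ends e \<longleftrightarrow> (\<exists>M. perfect_matching V E ends M \<and> e \<in> M)"

definition adj :: "'e set \<Rightarrow> ('e \<Rightarrow> 'a set) \<Rightarrow> 'a \<Rightarrow> 'a \<Rightarrow> bool" where
  "adj E ends u v \<longleftrightarrow> u \<noteq> v \<and> (\<exists>e\<in>E. ends e = {u, v})"

definition connected_graph :: "'a set \<Rightarrow> 'e set \<Rightarrow> ('e \<Rightarrow> 'a set) \<Rightarrow> bool" where
  "connected_graph V E ends \<longleftrightarrow> V \<noteq> {} \<and>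
     (\<forall>u\<in>V. \<forall>v\<in>V. (u, v) \<in> ({(x, y). x \<in> V \<and> y \<in> V \<and> adj E ends x y})\<^sup>*)"

definition matching_covered :: "'a set \<Rightarrow> 'e set \<Rightarrow> ('e \<Rightarrow> 'a set) \<Rightarrow> bool" where
  "matching_covered V E ends \<longleftrightarrow> connected_graph V E ends \<and> card V \<ge> 2 \<and>
     (\<forall>e\<in>E. admissible V E ends e)"

definition bipartition :: "'a set \<Rightarrow> 'e set \<Rightarrow> ('e \<Rightarrow> 'a set) \<Rightarrow> 'a set \<Rightarrow> 'a set \<Rightarrow> bool" where
  "bipartition V E ends U W \<longleftrightarrow> U \<union> W = V \<and> U \<inter> W = {} \<and>
     (\<forall>e\<in>E. card (ends e \<inter> U) = 1 \<and> card (ends e \<inter> W) = 1)"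

definition bipartite :: "'a set \<Rightarrow> 'e set \<Rightarrow> ('e \<Rightarrow> 'a set) \<Rightarrow> bool" where
  "bipartite V E ends \<longleftrightarrow> (\<exists>U W. bipartition V E ends U W)"

text \<open>Vertex deletion G - X: remove X and all edges incident with X.\<close>
definition del_edges_at :: "'e set \<Rightarrow> ('e \<Rightarrow> 'a set) \<Rightarrow> 'a set \<Rightarrow> 'e set" where
  "del_edges_at E ends X = {e \<in> E. ends e \<inter> X = {}}"

definition k_connected :: "nat \<Rightarrow> 'a set \<Rightarrow> 'e set \<Rightarrow> ('e \<Rightarrow> 'a set) \<Rightarrow> bool" where
  "k_connected k V E ends \<longleftrightarrow> card V > k \<and>
     (\<forall>X. X \<subseteq> V \<and> card X < k \<longrightarrow> connected_graph (V - X) (del_edges_at E ends X) ends)"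

definition brick :: "'a set \<Rightarrow> 'e set \<Rightarrow> ('e \<Rightarrow> 'a set) \<Rightarrow> bool" where
  "brick V E ends \<longleftrightarrow> k_connected 3 V E ends \<and> \<not> bipartite V E ends \<and>
     (\<forall>x\<in>V. \<forall>y\<in>V. x \<noteq> y \<longrightarrow>
        has_perfect_matching (V - {x, y}) (del_edges_at E ends {x, y}) ends)"

definition removable_doubleton :: "'a set \<Rightarrow> 'e set \<Rightarrow> ('e \<Rightarrow> 'a set) \<Rightarrow> 'e \<Rightarrow> 'e \<Rightarrow> bool" where
  "removable_doubleton V E ends e1 e2 \<longleftrightarrow> e1 \<in> E \<and> e2 \<in> E \<and> e1 \<noteq> e2 \<and>
     bipartite V (E - {e1, e2}) ends \<and> matching_covered V (E - {e1, e2}) ends"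

definition near_bipartite :: "'a set \<Rightarrow> 'e set \<Rightarrow> ('e \<Rightarrow> 'a set) \<Rightarrow> bool" where
  "near_bipartite V E ends \<longleftrightarrow> matching_covered V E ends \<and> \<not> bipartite V E ends \<and>
     (\<exists>e1 e2. removable_doubleton V E ends e1 e2)"

definition nbhd :: "'a set \<Rightarrow> 'e set \<Rightarrow> ('e \<Rightarrow> 'a set) \<Rightarrow> 'a set \<Rightarrow> 'a set" where
  "nbhd V E ends X = {v \<in> V - X. \<exists>u\<in>X. adj E ends u v}"

end

theory Submission
  imports Defs
begin

lemma partner:
  assumes mg: "multigraph V E ends"
    and pm: "perfect_matching (V - X) (del_edges_at E ends X) ends M"
    and s: "s \<in> V - X"
  shows "\<exists>e w. e \<in> M \<and> e \<in> E \<and> ends e = {s, w} \<and> w \<noteq> s \<and> w \<in> V - X"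
proof -
  from pm s obtain e where e: "e \<in> M" "s \<in> ends e"
    unfolding perfect_matching_def by blast
  have eM: "e \<in> del_edges_at E ends X" using pm e(1) unfolding perfect_matching_def by blast
  have eE: "e \<in> E" and dis: "ends e \<inter> X = {}"
    using eM unfolding del_edges_at_def by simp_all
  have c2: "card (ends e) = 2" and sub: "ends e \<subseteq> V"
    using mg eE unfolding multigraph_def by simp_all
  from c2 obtain a b where ab: "ends e = {a, b}" "a \<noteq> b" unfolding card_2_iff by blast
  have "s = a \<or> s = b" using ab(1) e(2) by simp
  then obtain w where w: "ends e = {s, w}" "w \<noteq> s"
  proof
    assume "s = a" thus ?thesis using that ab by simp
  next
    assume "s = b" thus ?thesis using that[of a] ab by (simp add: insert_commute)
  qed
  have "w \<in> V - X" using w sub dis by auto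
  thus ?thesis using e eE w by blast
qed

theorem mainTheorem5:
  fixes V :: "'a set" and E :: "'e set" and ends :: "'e \<Rightarrow> 'a set"
    and e1 e2 :: 'e and U W S S' :: "'a set"
  assumes "multigraph V E ends"
    and "brick V E ends"
    and "near_bipartite V E ends"
    and "removable_doubleton V E ends e1 e2"
    and "bipartition V (E - {e1, e2}) ends U W"
    and "ends e1 \<subseteq> U" and "ends e2 \<subseteq> W"
    and "(S \<subseteq> U \<and> card (S \<inter> ends e1) \<le> 1) \<or> (S \<subseteq> W \<and> card (S \<inter> ends e2) \<le> 1)"
    and "S' \<subseteq> V" and "nbhd V E ends S \<subseteq> S'" and "card S' \<ge> 2"
  shows "card S' \<ge> card S + 2"
proof -
  note mg = assms(1)
  have finV: "finite V" using mg unfolding multigraph_def by auto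
  have bp: "U \<union> W = V" "U \<inter> W = {}"
    "\<forall>e\<in>E - {e1, e2}. card (ends e \<inter> U) = 1 \<and> card (ends e \<inter> W) = 1"
    using assms(5) unfolding bipartition_def by auto
  have c2: "\<And>e. e \<in> E \<Longrightarrow> card (ends e) = 2" "\<And>e. e \<in> E \<Longrightarrow> ends e \<subseteq> V"
    using mg unfolding multigraph_def by auto
  have e12: "e1 \<in> E" "e2 \<in> E" using assms(4) unfolding removable_doubleton_def by auto
  have SV: "S \<subseteq> V" using assms(8) bp(1) by blast
  have finS: "finite S" using SV finV finite_subset by blast
  have indep: "\<not> ends e \<subseteq> S" if eE: "e \<in> E" for e
  proof
    assume es: "ends e \<subseteq> S"
    have ce: "card (ends e) = 2" using c2(1)[OF eE] .
    have fe: "finite (ends e)" using ce card.infinite by fastforce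
    show False
    proof (cases "e \<in> {e1, e2}")
      case False
      hence c1: "card (ends e \<inter> U) = 1 \<and> card (ends e \<inter> W) = 1" using bp(3) eE by auto
      from assms(8) es have "ends e \<subseteq> U \<or> ends e \<subseteq> W" by blast
      hence "ends e \<inter> U = ends e \<or> ends e \<inter> W = ends e" by blast
      then show False using ce c1 by (elim disjE) simp_all
    next
      case True
      have ne: "ends e \<noteq> {}" using ce by auto
      show False
      proof (cases "e = e1")
        case True
        show False
        proof (cases "S \<subseteq> U \<and> card (S \<inter> ends e1) \<le> 1")
          case True
          have "S \<inter> ends e1 = ends e" using es \<open>e = e1\<close> by blast
          hence "card (S \<inter> ends e1) = 2" using ce by simp
          thus False using True by auto
        next
          case False
          hence "S \<subseteq> W" using assms(8) by blast
          thus False using es \<open>e = e1\<close> assms(6) bp(2) ne by blast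
        qed
      next
        case False
        hence ee2: "e = e2" using True by auto
        show False
        proof (cases "S \<subseteq> W \<and> card (S \<inter> ends e2) \<le> 1")
          case True
          have "S \<inter> ends e2 = ends e" using es ee2 by blast
          hence "card (S \<inter> ends e2) = 2" using ce by simp
          thus False using True by auto
        next
          case False
          hence "S \<subseteq> U" using assms(8) by blast
          thus False using es ee2 assms(7) bp(2) ne by blast
        qed
      qed
    qed
  qed
  have brick: "k_connected 3 V E ends"
    "\<And>x y. x \<in> V \<Longrightarrow> y \<in> V \<Longrightarrow> x \<noteq> y \<Longrightarrow>
        has_perfect_matching (V - {x, y}) (del_edges_at E ends {x, y}) ends"
    using assms(2) unfolding brick_def by blast+
  have cardV: "card V > 3" using brick(1) unfolding k_connected_def by blast
  show ?thesis
  proof (cases "\<exists>x y. x \<in> S' - S \<and> y \<in> S' - S \<and> x \<noteq> y")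
    case True
    then obtain x y where xy: "x \<in> S' - S" "y \<in> S' - S" "x \<noteq> y" by blast
    then obtain M where pm: "perfect_matching (V - {x, y}) (del_edges_at E ends {x, y}) ends M"
      using brick(2)[of x y] assms(9) unfolding has_perfect_matching_def by blast
    define f where "f s = (SOME w. \<exists>e. e \<in> M \<and> e \<in> E \<and> ends e = {s, w} \<and> w \<noteq> s \<and> w \<in> V - {x, y})" for s
    have fP: "\<exists>e. e \<in> M \<and> e \<in> E \<and> ends e = {s, f s} \<and> f s \<noteq> s \<and> f s \<in> V - {x, y}"
      if "s \<in> S" for s
    proof -
      have "s \<in> V - {x, y}" using that SV xy by auto
      from partner[OF mg pm this]
      have "\<exists>w. \<exists>e. e \<in> M \<and> e \<in> E \<and> ends e = {s, w} \<and> w \<noteq> s \<and> w \<in> V - {x, y}" by blast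
      thus ?thesis unfolding f_def by (rule someI_ex)
    qed
    have img: "f ` S \<subseteq> S' - S - {x, y}"
    proof
      fix w assume "w \<in> f ` S"
      then obtain s where s: "s \<in> S" "w = f s" by blast
      from fP[OF s(1)] s(2) obtain e where e: "e \<in> M" "e \<in> E" "ends e = {s, w}" "w \<noteq> s" "w \<in> V - {x, y}"
        by blast
      have "w \<notin> S" using indep[OF e(2)] e(3) s(1) by auto
      moreover have "adj E ends s w" unfolding adj_def using e by auto
      ultimately have "w \<in> nbhd V E ends S" unfolding nbhd_def using e(5) s(1) by auto
      thus "w \<in> S' - S - {x, y}" using assms(10) e(5) \<open>w \<notin> S\<close> by auto
    qed
    have inj: "inj_on f S"
    proof
      fix s1 s2 assume s: "s1 \<in> S" "s2 \<in> S" "f s1 = f s2"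
      from fP[OF s(1)] obtain a where a: "a \<in> M" "ends a = {s1, f s1}" "f s1 \<noteq> s1" "f s1 \<in> V - {x, y}" by auto
      from fP[OF s(2)] obtain b where b: "b \<in> M" "ends b = {s2, f s2}" "f s2 \<noteq> s2" by auto
      have "\<exists>!e. e \<in> M \<and> f s1 \<in> ends e" using pm a(4) unfolding perfect_matching_def by blast
      moreover have "b \<in> M \<and> f s1 \<in> ends b" using b s(3) by simp
      moreover have "a \<in> M \<and> f s1 \<in> ends a" using a by simp
      ultimately have "a = b" by blast
      hence "{s1, f s1} = {s2, f s1}" using a(2) b(2) s(3) by simp
      thus "s1 = s2" using a(3) by (auto simp: doubleton_eq_iff)
    qed
    have finS': "finite S'" using assms(9) finV finite_subset by blast
    have "card S = card (f ` S)" using inj by (simp add: card_image)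
    also have "\<dots> \<le> card (S' - S - {x, y})" using img finS' by (intro card_mono) auto
    also have "\<dots> \<le> card (S' - {x, y})" using finS' by (intro card_mono) auto
    also have "\<dots> = card S' - card {x, y}" using xy finS' by (intro card_Diff_subset) auto
    also have "\<dots> = card S' - 2" using xy by simp
    finally show ?thesis using assms(11) by linarith
  next
    case False
    show ?thesis
    proof (cases "S = {}")
      case True thus ?thesis using assms(11) by simp
    next
      case Sne: False
      then obtain s where s: "s \<in> S" by blast
      have "\<exists>t. t \<in> V \<and> t \<noteq> s \<and> nbhd V E ends S \<subseteq> {t}"
      proof (cases "S' - S = {}")
        case True
        have "V - {s} \<noteq> {}"
        proof
          assume "V - {s} = {}"
          hence "V \<subseteq> {s}" by blast
          hence "card V \<le> card {s}" by (intro card_mono) auto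
          thus False using cardV by simp
        qed
        then obtain t where "t \<in> V" "t \<noteq> s" by blast
        thus ?thesis using True assms(10) unfolding nbhd_def by auto
      next
        case F2: False
        then obtain t where t: "t \<in> S' - S" by blast
        hence "S' - S \<subseteq> {t}" using False by blast
        moreover have "nbhd V E ends S \<subseteq> S' - S" using assms(10) unfolding nbhd_def by auto
        ultimately show ?thesis using t s assms(9) by blast
      qed
      then obtain t where t: "t \<in> V" "t \<noteq> s" "nbhd V E ends S \<subseteq> {t}" by blast
      have "V - {s, t} \<noteq> {}"
      proof
        assume "V - {s, t} = {}"
        hence "V \<subseteq> {s, t}" by blast
        hence "card V \<le> card {s, t}" by (intro card_mono) auto
        also have "\<dots> = 2" using t by simp
        finally show False using cardV by simp
      qed
      then obtain z where z: "z \<in> V" "z \<noteq> s" "z \<noteq> t" by blast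
      then obtain M where pm: "perfect_matching (V - {t, z}) (del_edges_at E ends {t, z}) ends M"
        using brick(2)[of t z] t unfolding has_perfect_matching_def by blast
      have "s \<in> V - {t, z}" using s SV t z by auto
      from partner[OF mg pm this] obtain e w where e: "e \<in> E" "ends e = {s, w}" "w \<noteq> s" "w \<in> V - {t, z}"
        by blast
      have "w \<notin> S" using indep[OF e(1)] e(2) s by auto
      moreover have "adj E ends s w" unfolding adj_def using e by auto
      ultimately have "w \<in> nbhd V E ends S" unfolding nbhd_def using e(4) s by auto
      thus ?thesis using t(3) e(4) by auto
    qed
  qed
qed

end
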